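(* Let $\alpha\in(0,1]$, $F\in C^{1,\alpha}_{\mathsf h}(\mathbb H,\mathbb R^2)$ and $p\in\mathbb H$ nondegenerate for $F$. Then there exists $\varepsilon_1>0$ such that whenever $x,y\in B(p,\varepsilon_1)$ satisfy $F(x)=F(y)$ and $[x^{-1}y]^{\mathsf v}\le[x^{-1}y]^{\mathsf h}$, we have $x=y$. In particular this holds if $(x^{-1}y)^{\mathsf v}=0$.
   Context: The Heisenberg group $\mathbb H$ is $\mathbb R^3$ with product $(x^1,x^2,x^3)(y^1,y^2,y^3)=(x^1+y^1,x^2+y^2,x^3+y^3+x^1y^2-x^2y^1)$, inverse $x^{-1}=-x$. For $x\in\mathbb H$: $x^{\mathsf h}=(x^1,x^2)$, $x^{\mathsf v}=x^3$, $[x]^{\mathsf h}=|x^{\mathsf h}|$, $[x]^{\mathsf v}=\sqrt{|x^3|}$. $\mathsf d$ is a fixed distance on $\mathbb H$, left-invariant and $1$-homogeneous w.r.t. dilations $\delta_r(x)=(rx^1,rx^2,r^2x^3)$; $B(x,r)$ is the open $\mathsf d$-ball. $X_1=\partial_1-x^2\partial_3$, $X_2=\partial_2+x^1\partial_3$. $C^{1,\alpha}_{\mathsf h}(\mathbb H,\mathbb R^2)$: maps $F$ with $X_1F,X_2F$ existing everywhere and $\nabla_{\mathsf h}F=[X_1F,X_2F]$ $\alpha$-Hölder w.r.t. $\mathsf d$ on bounded sets. $p$ is nondegenerate for $F$ if $\nabla_{\mathsf h}F(p)$ is invertible. *)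

theory Defs
  imports "HOL-Analysis.Analysis"
begin

type_synonym hpt = "real \<times> real \<times> real"

fun hmul :: "hpt \<Rightarrow> hpt \<Rightarrow> hpt" where
  "hmul (x1, x2, x3) (y1, y2, y3) = (x1 + y1, x2 + y2, x3 + y3 + x1 * y2 - x2 * y1)"

fun hinv :: "hpt \<Rightarrow> hpt" where
  "hinv (x1, x2, x3) = (- x1, - x2, - x3)"

fun hdil :: "real \<Rightarrow> hpt \<Rightarrow> hpt" where
  "hdil r (x1, x2, x3) = (r * x1, r * x2, r^2 * x3)"

fun hnorm_h :: "hpt \<Rightarrow> real" where
  "hnorm_h (x1, x2, x3) = sqrt (x1^2 + x2^2)"

fun hnorm_v :: "hpt \<Rightarrow> real" where
  "hnorm_v (x1, x2, x3) = sqrt \<bar>x3\<bar>"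

fun hvert :: "hpt \<Rightarrow> real" where
  "hvert (x1, x2, x3) = x3"

definition homog_distance :: "(hpt \<Rightarrow> hpt \<Rightarrow> real) \<Rightarrow> bool" where
  "homog_distance d \<longleftrightarrow>
     (\<forall>x y. d x y = 0 \<longleftrightarrow> x = y) \<and>
     (\<forall>x y. d x y = d y x) \<and>
     (\<forall>x y z. d x z \<le> d x y + d y z) \<and>
     (\<forall>x y z. d (hmul z x) (hmul z y) = d x y) \<and>
     (\<forall>r x y. r > 0 \<longrightarrow> d (hdil r x) (hdil r y) = r * d x y)"

definition hball :: "(hpt \<Rightarrow> hpt \<Rightarrow> real) \<Rightarrow> hpt \<Rightarrow> real \<Rightarrow> hpt set" where
  "hball d x r = {y. d x y < r}"

definition hdir :: "nat \<Rightarrow> real \<Rightarrow> hpt" where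
  "hdir j t = (if j = 1 then (t, 0, 0) else (0, t, 0))"

definition hasX :: "nat \<Rightarrow> (hpt \<Rightarrow> real^2) \<Rightarrow> hpt \<Rightarrow> real^2 \<Rightarrow> bool" where
  "hasX j F x v \<longleftrightarrow> ((\<lambda>t. F (hmul x (hdir j t))) has_vector_derivative v) (at 0)"

definition Xder :: "nat \<Rightarrow> (hpt \<Rightarrow> real^2) \<Rightarrow> hpt \<Rightarrow> real^2" where
  "Xder j F x = (SOME v. hasX j F x v)"

definition hgrad :: "(hpt \<Rightarrow> real^2) \<Rightarrow> hpt \<Rightarrow> real^2^2" where
  "hgrad F x = (\<chi> i k. (if k = 1 then Xder 1 F x else Xder 2 F x) $ i)"

definition C1alpha_h :: "(hpt \<Rightarrow> hpt \<Rightarrow> real) \<Rightarrow> real \<Rightarrow> (hpt \<Rightarrow> real^2) \<Rightarrow> bool" where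
  "C1alpha_h d \<alpha> F \<longleftrightarrow>
     (\<forall>x. \<forall>j\<in>{1,2}. \<exists>v. hasX j F x v) \<and>
     (\<forall>K. (\<exists>z R. K \<subseteq> hball d z R) \<longrightarrow>
        (\<exists>C. \<forall>x\<in>K. \<forall>y\<in>K. norm (hgrad F x - hgrad F y) \<le> C * d x y powr \<alpha>))"

definition nondegenerate :: "(hpt \<Rightarrow> real^2) \<Rightarrow> hpt \<Rightarrow> bool" where
  "nondegenerate F p \<longleftrightarrow> invertible (hgrad F p)"

end

theory Submission
  imports Defs
begin

lemma hmul_assoc: "hmul (hmul x y) z = hmul x (hmul y z)"
  by (cases x, cases y, cases z) (simp add: algebra_simps)

lemma hmul_zero[simp]: "hmul z (0,0,0) = z" "hmul (0,0,0) z = z"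
  by (cases z, simp)+

lemma hmul_hinv[simp]: "hmul q (hinv q) = (0,0,0)" "hmul (hinv q) q = (0,0,0)"
  by (cases q, simp)+

lemma hdir_add: "hmul (hdir j s) (hdir j h) = hdir j (s + h)"
  by (simp add: hdir_def)

lemma hdir_zero[simp]: "hdir j 0 = (0,0,0)"
  by (simp add: hdir_def)

lemma hd_nonneg: "homog_distance d \<Longrightarrow> 0 \<le> d x y"
proof -
  assume h: "homog_distance d"
  have "d x x \<le> d x y + d y x" "d x x = 0" "d y x = d x y"
    using h unfolding homog_distance_def by blast+
  then show ?thesis by linarith
qed

lemma hd_left: "homog_distance d \<Longrightarrow> d z (hmul z q) = d (0,0,0) q"
proof -
  assume h: "homog_distance d"
  have "d (hmul z (0,0,0)) (hmul z q) = d (0,0,0) q"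
    using h unfolding homog_distance_def by blast
  then show ?thesis by simp
qed

lemma seg_est:
  fixes F :: "hpt \<Rightarrow> real^2"
  assumes X: "\<And>s. s \<in> closed_segment 0 t \<Longrightarrow> hasX j F (hmul z (hdir j s)) (D s)"
    and B: "\<And>s. s \<in> closed_segment 0 t \<Longrightarrow> norm (D s - w) \<le> \<eta>"
  shows "norm (F (hmul z (hdir j t)) - F z - t *\<^sub>R w) \<le> \<eta> * \<bar>t\<bar>"
proof -
  define g where "g s = F (hmul z (hdir j s))" for s
  have gd: "(g has_vector_derivative D s) (at s)" if "s \<in> closed_segment 0 t" for s
  proof -
    have "((\<lambda>h. g (s + h)) has_vector_derivative D s) (at 0)"
      using X[OF that] unfolding hasX_def g_def by (simp add: hmul_assoc hdir_add)
    then have gs: "((\<lambda>h. g (s + h)) has_vector_derivative D s) (at ((\<lambda>x. x - s) s))" by simp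
    have dd: "((\<lambda>x. x - s) has_vector_derivative 1) (at s)"
      by (auto intro!: derivative_eq_intros)
    have "(((\<lambda>h. g (s + h)) \<circ> (\<lambda>x. x - s)) has_vector_derivative (1 *\<^sub>R D s)) (at s)"
      by (rule vector_diff_chain_at[OF dd gs])
    moreover have "((\<lambda>h. g (s + h)) \<circ> (\<lambda>x. x - s)) = g" by (auto simp: o_def)
    ultimately show ?thesis by simp
  qed
  define h where "h s = g s - s *\<^sub>R w" for s
  have hd: "(h has_derivative (\<lambda>x. x *\<^sub>R (D s - w))) (at s within closed_segment 0 t)"
    if "s \<in> closed_segment 0 t" for s
  proof -
    have "(h has_vector_derivative (D s - w)) (at s)"
      unfolding h_def using gd[OF that]
      by (auto intro!: derivative_eq_intros)
    then show ?thesis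
      by (simp add: has_vector_derivative_def has_derivative_at_withinI)
  qed
  have on: "onorm (\<lambda>x::real. x *\<^sub>R (D s - w)) \<le> \<eta>" if "s \<in> closed_segment 0 t" for s
    using onorm_scaleR_left[of "\<lambda>x::real. x" "D s - w"] B[OF that]
    by (simp add: onorm_id bounded_linear_ident)
  have "norm (h t - h 0) \<le> \<eta> * norm (t - 0)"
    by (rule differentiable_bound[OF convex_closed_segment hd on]) auto
  then have "norm (F (hmul z (hdir j t)) - t *\<^sub>R w - F z) \<le> \<eta> * \<bar>t\<bar>"
    unfolding h_def g_def by simp
  moreover have "F (hmul z (hdir j t)) - t *\<^sub>R w - F z = F (hmul z (hdir j t)) - F z - t *\<^sub>R w"
    by (simp add: diff_diff_eq add.commute)
  ultimately show ?thesis by (simp only:)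
qed

fun walk :: "hpt \<Rightarrow> (nat \<times> real) list \<Rightarrow> hpt" where
  "walk z [] = z"
| "walk z ((j,t) # L) = walk (hmul z (hdir j t)) L"

definition lsum :: "(nat \<times> real) list \<Rightarrow> real" where
  "lsum L = sum_list (map (\<lambda>(j,t). \<bar>t\<bar>) L)"

lemma lsum_simps[simp]: "lsum [] = 0" "lsum ((j,t) # L) = \<bar>t\<bar> + lsum L"
  by (simp_all add: lsum_def)

lemma lsum_nonneg: "0 \<le> lsum L"
  by (induction L) (auto simp: lsum_def intro!: sum_list_nonneg)

lemma walk_dist:
  assumes hd: "homog_distance d" and K: "\<forall>(j,t)\<in>set L. d (0,0,0) (hdir j t) \<le> K * \<bar>t\<bar>"
  shows "d z (walk z L) \<le> K * lsum L"
  using K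
proof (induction L arbitrary: z)
  case Nil
  have "d z z = 0" using hd unfolding homog_distance_def by blast
  then show ?case by simp
next
  case (Cons a L)
  obtain j t where a: "a = (j,t)" by fastforce
  let ?z = "hmul z (hdir j t)"
  have "d z (walk ?z L) \<le> d z ?z + d ?z (walk ?z L)"
    using hd unfolding homog_distance_def by blast
  also have "d z ?z = d (0,0,0) (hdir j t)" by (rule hd_left[OF hd])
  also have "\<dots> \<le> K * \<bar>t\<bar>" using Cons.prems a by auto
  also have "d ?z (walk ?z L) \<le> K * lsum L" using Cons a by auto
  finally show ?case using a by (simp add: algebra_simps)
qed

lemma walk_est:
  fixes F :: "hpt \<Rightarrow> real^2" and v :: "nat \<Rightarrow> real^2"
  assumes hd: "homog_distance d"
    and K0: "0 \<le> K"
    and Kb: "\<And>j t. j \<in> {1,2} \<Longrightarrow> d (0,0,0) (hdir j t) \<le> K * \<bar>t\<bar>"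
    and js: "\<forall>(j,t)\<in>set L. j \<in> {1,2}"
    and X: "\<And>x j. j \<in> {1,2} \<Longrightarrow> hasX j F x (Xder j F x)"
    and good: "\<And>q j. d p q < r \<Longrightarrow> j \<in> {1,2} \<Longrightarrow> norm (Xder j F q - v j) \<le> \<eta>"
    and start: "d p z + K * lsum L < r"
  shows "norm (F (walk z L) - F z - sum_list (map (\<lambda>(j,t). t *\<^sub>R v j) L)) \<le> \<eta> * lsum L"
  using js start
proof (induction L arbitrary: z)
  case Nil
  then show ?case by simp
next
  case (Cons a L)
  obtain j t where a: "a = (j,t)" by fastforce
  have j: "j \<in> {1,2}" using Cons.prems a by auto
  let ?z = "hmul z (hdir j t)"
  have Lt: "d p z + K * \<bar>t\<bar> + K * lsum L < r" using Cons.prems(2) a by (simp add: algebra_simps)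
  have KL: "0 \<le> K * lsum L" using K0 lsum_nonneg by simp
  have seg: "norm (F ?z - F z - t *\<^sub>R v j) \<le> \<eta> * \<bar>t\<bar>"
  proof (rule seg_est)
    fix s assume s: "s \<in> closed_segment 0 t"
    have st: "\<bar>s\<bar> \<le> \<bar>t\<bar>" using s by (auto simp: closed_segment_eq_real_ivl split: if_splits)
    show "hasX j F (hmul z (hdir j s)) (Xder j F (hmul z (hdir j s)))" using X j by blast
    have "d p (hmul z (hdir j s)) \<le> d p z + d z (hmul z (hdir j s))"
      using hd unfolding homog_distance_def by blast
    also have "d z (hmul z (hdir j s)) = d (0,0,0) (hdir j s)" by (rule hd_left[OF hd])
    also have "\<dots> \<le> K * \<bar>s\<bar>" using Kb j by blast
    also have "\<dots> \<le> K * \<bar>t\<bar>" using st K0 by (simp add: mult_left_mono)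
    finally have "d p (hmul z (hdir j s)) < r" using Lt KL by linarith
    then show "norm (Xder j F (hmul z (hdir j s)) - v j) \<le> \<eta>" using good j by blast
  qed
  have "d p ?z \<le> d p z + d z ?z" using hd unfolding homog_distance_def by blast
  also have "d z ?z = d (0,0,0) (hdir j t)" by (rule hd_left[OF hd])
  also have "\<dots> \<le> K * \<bar>t\<bar>" using Kb j by blast
  finally have "d p ?z + K * lsum L < r" using Lt by linarith
  then have IH: "norm (F (walk ?z L) - F ?z - sum_list (map (\<lambda>(j,t). t *\<^sub>R v j) L)) \<le> \<eta> * lsum L"
    using Cons.IH Cons.prems(1) by auto
  have eq: "F (walk z (a # L)) - F z - sum_list (map (\<lambda>(j,t). t *\<^sub>R v j) (a # L))
      = (F (walk ?z L) - F ?z - sum_list (map (\<lambda>(j,t). t *\<^sub>R v j) L)) + (F ?z - F z - t *\<^sub>R v j)"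
    using a by (simp add: algebra_simps)
  have "norm (F (walk z (a # L)) - F z - sum_list (map (\<lambda>(j,t). t *\<^sub>R v j) (a # L)))
     \<le> norm (F (walk ?z L) - F ?z - sum_list (map (\<lambda>(j,t). t *\<^sub>R v j) L)) + norm (F ?z - F z - t *\<^sub>R v j)"
    unfolding eq by (rule norm_triangle_ineq)
  also have "\<dots> \<le> \<eta> * lsum L + \<eta> * \<bar>t\<bar>" using IH seg by linarith
  finally show ?case using a by (simp add: algebra_simps)
qed

lemma hd_sym: "homog_distance d \<Longrightarrow> d x y = d y x"
  unfolding homog_distance_def by blast

lemma hd_eq0: "homog_distance d \<Longrightarrow> d x y = 0 \<longleftrightarrow> x = y"
  unfolding homog_distance_def by blast

lemma hd_zero: "homog_distance d \<Longrightarrow> d x x = 0"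
  unfolding homog_distance_def by blast

lemma hd_tri: "homog_distance d \<Longrightarrow> d x z \<le> d x y + d y z"
  unfolding homog_distance_def by blast

lemma hd_dil: "homog_distance d \<Longrightarrow> r > 0 \<Longrightarrow> d (hdil r x) (hdil r y) = r * d x y"
  unfolding homog_distance_def by blast

lemma hd_inv: "homog_distance d \<Longrightarrow> d (0,0,0) (hinv q) = d (0,0,0) q"
proof -
  assume h: "homog_distance d"
  have "d q (hmul q (hinv q)) = d (0,0,0) (hinv q)" by (rule hd_left[OF h])
  then show ?thesis using hd_sym[OF h] by simp
qed

lemma hdir_eq: "d (0,0,0) (hdir j t) = \<bar>t\<bar> * d (0,0,0) (hdir j 1)" if h: "homog_distance d" for d j t
proof -
  consider "t > 0" | "t = 0" | "t < 0" by linarith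
  then show ?thesis
  proof cases
    case 1
    have "d (hdil t (0,0,0)) (hdil t (hdir j 1)) = t * d (0,0,0) (hdir j 1)" by (rule hd_dil[OF h 1])
    moreover have "hdil t (0,0,0) = (0,0,0)" "hdil t (hdir j 1) = hdir j t" by (auto simp: hdir_def)
    ultimately show ?thesis using 1 by simp
  next
    case 2 then show ?thesis using hd_zero[OF h] by simp
  next
    case 3
    have "d (hdil (-t) (0,0,0)) (hdil (-t) (hdir j 1)) = (-t) * d (0,0,0) (hdir j 1)" by (rule hd_dil[OF h]) (use 3 in simp)
    moreover have "hdil (-t) (0,0,0) = (0,0,0)" "hdil (-t) (hdir j 1) = hinv (hdir j t)" by (auto simp: hdir_def)
    ultimately show ?thesis using 3 hd_inv[OF h] by simp
  qed
qed

lemma hdir_bound: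
  assumes h: "homog_distance d" and j: "j \<in> {1,2}"
  shows "d (0,0,0) (hdir j t) \<le> (d (0,0,0) (1,0,0) + d (0,0,0) (0,1,0)) * \<bar>t\<bar>"
proof -
  have "d (0,0,0) (hdir j 1) \<le> d (0,0,0) (1,0,0) + d (0,0,0) (0,1,0)"
    using j hd_nonneg[OF h] by (auto simp: hdir_def)
  then show ?thesis unfolding hdir_eq[OF h, of j t]
    by (metis abs_ge_zero mult.commute mult_left_mono)
qed

definition pathL :: "real \<Rightarrow> real \<Rightarrow> real \<Rightarrow> (nat \<times> real) list" where
  "pathL a b c = (let u = sqrt (\<bar>c - a * b\<bar> / 2) in
     if 0 \<le> c - a * b then [(1,a),(2,b),(1,u),(2,u),(1,-u),(2,-u)]
     else [(1,a),(2,b),(2,u),(1,u),(2,-u),(1,-u)])"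

lemma walk6a: "c = a*b + 2*u*u \<Longrightarrow> walk z [(1,a),(2,b),(1,u),(2,u),(1,-u),(2,-u)] = hmul z (a,b,c)"
  by (cases z) (simp add: hdir_def algebra_simps)

lemma walk6b: "c = a*b - 2*u*u \<Longrightarrow> walk z [(1,a),(2,b),(2,u),(1,u),(2,-u),(1,-u)] = hmul z (a,b,c)"
  by (cases z) (simp add: hdir_def algebra_simps)

lemma walk_pathL: "walk z (pathL a b c) = hmul z (a,b,c)"
proof -
  define u where "u = sqrt (\<bar>c - a * b\<bar> / 2)"
  have uu: "u * u = \<bar>c - a * b\<bar> / 2" unfolding u_def by (simp add: real_sqrt_mult_self)
  show ?thesis
  proof (cases "0 \<le> c - a * b")
    case True
    then have "c = a*b + 2*u*u" using uu by simp
    then show ?thesis unfolding pathL_def Let_def u_def[symmetric] if_P[OF True] by (rule walk6a)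
  next
    case False
    then have "c = a*b - 2*u*u" using uu by simp
    then show ?thesis unfolding pathL_def Let_def u_def[symmetric] if_not_P[OF False] by (rule walk6b)
  qed
qed

lemma lsum_pathL: "lsum (pathL a b c) = \<bar>a\<bar> + \<bar>b\<bar> + 4 * sqrt (\<bar>c - a * b\<bar> / 2)"
  by (simp add: pathL_def Let_def)

lemma aux6a: "(a::real) *\<^sub>R x + (b *\<^sub>R y + (u *\<^sub>R x + (u *\<^sub>R y + ((- u) *\<^sub>R x + (- u) *\<^sub>R y)))) = a *\<^sub>R x + b *\<^sub>R y"
  for x y :: "'a::real_vector"
  by (simp add: scaleR_minus_left)

lemma aux6b: "(a::real) *\<^sub>R x + (b *\<^sub>R y + (u *\<^sub>R y + (u *\<^sub>R x + ((- u) *\<^sub>R y + (- u) *\<^sub>R x)))) = a *\<^sub>R x + b *\<^sub>R y"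
  for x y :: "'a::real_vector"
  by (simp add: scaleR_minus_left)

lemma sum_pathL: fixes v :: "nat \<Rightarrow> real^2" shows "sum_list (map (\<lambda>(j,t). t *\<^sub>R v j) (pathL a b c)) = a *\<^sub>R v 1 + b *\<^sub>R v 2"
proof -
  define u where "u = sqrt (\<bar>c - a * b\<bar> / 2)"
  show ?thesis
  proof (cases "0 \<le> c - a * b")
    case True
    then show ?thesis unfolding pathL_def Let_def u_def[symmetric] if_P[OF True] using aux6a[of a "v 1" b "v 2" u] by simp
  next
    case False
    then show ?thesis unfolding pathL_def Let_def u_def[symmetric] if_not_P[OF False] using aux6b[of a "v 1" b "v 2" u] by simp
  qed
qed

lemma js_pathL: "\<forall>(j,t)\<in>set (pathL a b c). j \<in> {1,2}"
  by (simp add: pathL_def Let_def)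

definition rho :: "hpt \<Rightarrow> real" where
  "rho w = \<bar>fst w\<bar> + \<bar>fst (snd w)\<bar> + sqrt \<bar>snd (snd w)\<bar>"

lemma hinv_mul_eq: "hmul (hinv v) w =
   (fst w - fst v, fst (snd w) - fst (snd v),
    snd (snd w) - snd (snd v) - fst v * fst (snd w) + fst (snd v) * fst w)"
  by (cases v, cases w) simp

lemma N_upper:
  assumes h: "homog_distance d"
  shows "d (0,0,0) (q1,q2,q3) \<le> (d (0,0,0) (1,0,0) + d (0,0,0) (0,1,0)) * lsum (pathL q1 q2 q3)"
proof -
  have "d (0,0,0) (walk (0,0,0) (pathL q1 q2 q3)) \<le> (d (0,0,0) (1,0,0) + d (0,0,0) (0,1,0)) * lsum (pathL q1 q2 q3)"
    by (rule walk_dist[OF h]) (use js_pathL[of q1 q2 q3] hdir_bound[OF h] in fast)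
  then show ?thesis by (simp add: walk_pathL)
qed

lemma N_cont:
  assumes h: "homog_distance d"
  shows "continuous_on UNIV (\<lambda>w. d (0,0,0) w)"
proof (rule continuous_at_imp_continuous_on, intro ballI)
  fix v :: hpt
  define K where "K = d (0,0,0) (1,0,0) + d (0,0,0) (0,1,0)"
  define G where "G w = K * (\<bar>fst w - fst v\<bar> + \<bar>fst (snd w) - fst (snd v)\<bar> +
     4 * sqrt (\<bar>(snd (snd w) - snd (snd v) - fst v * fst (snd w) + fst (snd v) * fst w)
       - (fst w - fst v) * (fst (snd w) - fst (snd v))\<bar> / 2))" for w
  have b: "norm (d (0,0,0) w - d (0,0,0) v) \<le> G w" for w
  proof -
    have "d v w = d (hmul v (0,0,0)) (hmul v (hmul (hinv v) w))" by (simp add: hmul_assoc[symmetric])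
    also have "\<dots> = d (0,0,0) (hmul (hinv v) w)" using h unfolding homog_distance_def by blast
    also have "\<dots> \<le> G w" unfolding hinv_mul_eq G_def K_def
      using N_upper[OF h] by (simp add: lsum_pathL)
    finally have "d v w \<le> G w" .
    moreover have "d (0,0,0) w \<le> d (0,0,0) v + d v w" "d (0,0,0) v \<le> d (0,0,0) w + d w v" "d w v = d v w"
      using hd_tri[OF h] hd_sym[OF h] by blast+
    ultimately show ?thesis by simp
  qed
  have "(G \<longlongrightarrow> G v) (at v)" unfolding G_def
    by (intro tendsto_intros) auto
  moreover have "G v = 0" unfolding G_def by simp
  ultimately have "(G \<longlongrightarrow> 0) (at v)" by simp
  then have "((\<lambda>w. d (0,0,0) w - d (0,0,0) v) \<longlongrightarrow> 0) (at v)"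
    by (rule Lim_null_comparison[rotated]) (use b in simp)
  then show "isCont (\<lambda>w. d (0,0,0) w) v" unfolding isCont_def by (simp add: Lim_null[symmetric])
qed

lemma N_lower:
  assumes h: "homog_distance d"
  shows "\<exists>c>0. \<forall>w. c * rho w \<le> d (0,0,0) w"
proof -
  define S where "S = {w. rho w = 1}"
  have cr: "continuous_on UNIV rho" unfolding rho_def by (intro continuous_intros)
  have cS: "closed S" unfolding S_def by (rule closed_Collect_eq[OF cr]) (intro continuous_intros)
  have sub: "S \<subseteq> {-1..1} \<times> {-1..1} \<times> {-1..1}"
  proof
    fix w assume "w \<in> S"
    then have r: "rho w = 1" by (simp add: S_def)
    obtain a b c where w: "w = (a,b,c)" by (cases w)
    have r': "\<bar>a\<bar> + \<bar>b\<bar> + sqrt \<bar>c\<bar> = 1" using r by (simp add: rho_def w)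
    have "0 \<le> sqrt \<bar>c\<bar>" by simp
    then have "sqrt \<bar>c\<bar> \<le> 1" "\<bar>a\<bar> \<le> 1" "\<bar>b\<bar> \<le> 1" using r' by linarith+
    then have "\<bar>c\<bar> \<le> 1" by simp
    then show "w \<in> {-1..1} \<times> {-1..1} \<times> {-1..1}" using \<open>\<bar>a\<bar> \<le> 1\<close> \<open>\<bar>b\<bar> \<le> 1\<close> by (auto simp: w abs_le_iff)
  qed
  have "compact ({-1..(1::real)} \<times> {-1..(1::real)} \<times> {-1..(1::real)})"
    by (intro compact_Times compact_Icc)
  then have "compact (({-1..(1::real)} \<times> {-1..(1::real)} \<times> {-1..(1::real)}) \<inter> S)" using cS by blast
  moreover have "({-1..(1::real)} \<times> {-1..(1::real)} \<times> {-1..(1::real)}) \<inter> S = S" using sub by blast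
  ultimately have comp: "compact S" by simp
  have "(1,0,0) \<in> S" unfolding S_def by (simp add: rho_def)
  then have ne: "S \<noteq> {}" by blast
  obtain w0 where w0: "w0 \<in> S" "\<And>y. y \<in> S \<Longrightarrow> d (0,0,0) w0 \<le> d (0,0,0) y"
  proof -
    have "continuous_on S (\<lambda>w. d (0,0,0) w)" by (rule continuous_on_subset[OF N_cont[OF h]]) simp
    from continuous_attains_inf[OF comp ne this] show ?thesis using that by blast
  qed
  define c0 where "c0 = d (0,0,0) w0"
  have "w0 \<noteq> (0,0,0)"
  proof
    assume "w0 = (0,0,0)"
    then have "rho w0 = 0" by (simp add: rho_def)
    with w0(1) show False by (simp add: S_def)
  qed
  then have "c0 \<noteq> 0" unfolding c0_def using hd_eq0[OF h, of "(0,0,0)" w0] by simp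
  then have c0: "c0 > 0" using hd_nonneg[OF h, of "(0,0,0)" w0] c0_def by simp
  have "c0 * rho w \<le> d (0,0,0) w" for w
  proof (cases "rho w = 0")
    case True then show ?thesis using hd_nonneg[OF h, of "(0,0,0)" w] by simp
  next
    case False
    obtain a b c where w: "w = (a,b,c)" by (cases w)
    have "0 \<le> sqrt \<bar>snd (snd w)\<bar>" "0 \<le> \<bar>fst w\<bar>" "0 \<le> \<bar>fst (snd w)\<bar>" by simp_all
    then have "0 \<le> rho w" unfolding rho_def by linarith
    then have rpos: "rho w > 0" using False by linarith
    define r where "r = rho w"
    have rp: "r > 0" using rpos r_def by simp
    define w' where "w' = hdil (1/r) w"
    have sq: "sqrt \<bar>(1/r)^2 * c\<bar> = sqrt \<bar>c\<bar> / r" using rp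
      by (simp add: abs_mult real_sqrt_mult real_sqrt_divide)
    have "rho w' = rho w / r" unfolding w'_def w rho_def using rp sq
      by (simp add: abs_mult add_divide_distrib)
    then have "w' \<in> S" using rp r_def by (simp add: S_def)
    then have m: "c0 \<le> d (0,0,0) w'" using w0(2) c0_def by blast
    have "hdil r w' = w" "hdil r (0,0,0) = (0,0,0)" using rp by (auto simp: w'_def w power2_eq_square)
    then have "d (0,0,0) w = r * d (0,0,0) w'" using hd_dil[OF h rp, of "(0,0,0)" w'] by simp
    then show ?thesis using m rp r_def by (simp add: mult.commute mult_left_mono)
  qed
  then show ?thesis using c0 by blast
qed

lemma two_ne_one: "(2::2) \<noteq> 1"
  by simp

lemma col_bound: fixes A :: "real^2^2" shows "norm (\<chi> i. A $ i $ k) \<le> 2 * norm A"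
proof -
  have "norm (\<chi> i. A $ i $ k) \<le> (\<Sum>i\<in>UNIV. \<bar>(\<chi> i. A $ i $ k) $ i\<bar>)" by (rule norm_le_l1_cart)
  also have "\<dots> = \<bar>A $ 1 $ k\<bar> + \<bar>A $ 2 $ k\<bar>" by (simp add: sum_2)
  also have "\<dots> \<le> norm A + norm A"
  proof (rule add_mono)
    show "\<bar>A $ 1 $ k\<bar> \<le> norm A" using component_le_norm_cart[of "A $ 1" k] Finite_Cartesian_Product.norm_nth_le[of A 1] by linarith
    show "\<bar>A $ 2 $ k\<bar> \<le> norm A" using component_le_norm_cart[of "A $ 2" k] Finite_Cartesian_Product.norm_nth_le[of A 2] by linarith
  qed
  finally show ?thesis by simp
qed

lemma Xcol:
  assumes j: "j \<in> {1,2}"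
  shows "Xder j F x - Xder j F y = (\<chi> i. (hgrad F x - hgrad F y) $ i $ (if j = 1 then 1 else 2))"
  using j by (auto simp: vec_eq_iff hgrad_def)

lemma hgrad_mult:
  "hgrad F p *v z = (z $ 1) *\<^sub>R Xder 1 F p + (z $ 2) *\<^sub>R Xder 2 F p"
  by (simp add: vec_eq_iff matrix_vector_mult_def hgrad_def sum_2 mult.commute)

lemma inv_lower:
  assumes inv: "invertible (hgrad F p)"
  shows "\<exists>m>0. \<forall>a b. m * (\<bar>a\<bar> + \<bar>b\<bar>) \<le> norm (a *\<^sub>R Xder 1 F p + b *\<^sub>R Xder 2 F p)"
proof -
  obtain M' where M': "M' ** hgrad F p = mat 1" using inv unfolding invertible_def by blast
  obtain B where B: "B > 0" "\<And>x. norm (M' *v x) \<le> B * norm x"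
    using linear_bounded_pos[OF matrix_vector_mul_linear[of M']] by blast
  have "(1 / (2*B)) * (\<bar>a\<bar> + \<bar>b\<bar>) \<le> norm (a *\<^sub>R Xder 1 F p + b *\<^sub>R Xder 2 F p)" for a b
  proof -
    define z :: "real^2" where "z = (\<chi> i. if i = 1 then a else b)"
    have z1: "z $ 1 = a" "z $ 2 = b" by (simp_all add: z_def)
    have Mz: "hgrad F p *v z = a *\<^sub>R Xder 1 F p + b *\<^sub>R Xder 2 F p" by (simp add: hgrad_mult z1)
    have "z = M' *v (hgrad F p *v z)" by (simp add: matrix_vector_mul_assoc M')
    then have nz: "norm z \<le> B * norm (a *\<^sub>R Xder 1 F p + b *\<^sub>R Xder 2 F p)" using B(2) Mz by metis
    have "\<bar>a\<bar> \<le> norm z" "\<bar>b\<bar> \<le> norm z" using component_le_norm_cart[of z 1] component_le_norm_cart[of z 2] z1 by simp_all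
    then have "\<bar>a\<bar> + \<bar>b\<bar> \<le> 2 * B * norm (a *\<^sub>R Xder 1 F p + b *\<^sub>R Xder 2 F p)" using nz by linarith
    then show ?thesis using B(1) by (simp add: field_simps)
  qed
  moreover have "1 / (2*B) > 0" using B(1) by simp
  ultimately show ?thesis by blast
qed

theorem mainTheorem3:
  fixes d :: "hpt \<Rightarrow> hpt \<Rightarrow> real" and \<alpha> :: real
    and F :: "hpt \<Rightarrow> real^2" and p :: hpt
  assumes "homog_distance d"
    and "0 < \<alpha>" and "\<alpha> \<le> 1"
    and "C1alpha_h d \<alpha> F"
    and "nondegenerate F p"
  shows "\<exists>\<epsilon>1>0.
     (\<forall>x\<in>hball d p \<epsilon>1. \<forall>y\<in>hball d p \<epsilon>1.
        F x = F y \<and> hnorm_v (hmul (hinv x) y) \<le> hnorm_h (hmul (hinv x) y) \<longrightarrow> x = y) \<and>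
     (\<forall>x\<in>hball d p \<epsilon>1. \<forall>y\<in>hball d p \<epsilon>1.
        F x = F y \<and> hvert (hmul (hinv x) y) = 0 \<longrightarrow> x = y)"
proof -
  have hd: "homog_distance d" by fact
  have al: "0 < \<alpha>" by fact
  have X: "hasX j F x (Xder j F x)" if "j \<in> {1,2}" for x j
  proof -
    have "\<exists>v. hasX j F x v" using assms(4) that unfolding C1alpha_h_def by blast
    then show ?thesis unfolding Xder_def by (rule someI_ex)
  qed
  have ex: "\<exists>z R. hball d p 1 \<subseteq> hball d z R" by (intro exI) (rule order_refl)
  have all: "\<forall>K. (\<exists>z R. K \<subseteq> hball d z R) \<longrightarrow>
        (\<exists>C. \<forall>x\<in>K. \<forall>y\<in>K. norm (hgrad F x - hgrad F y) \<le> C * d x y powr \<alpha>)"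
    using assms(4) unfolding C1alpha_h_def by (rule conjunct2)
  obtain C where C0: "\<forall>x\<in>hball d p 1. \<forall>y\<in>hball d p 1. norm (hgrad F x - hgrad F y) \<le> C * d x y powr \<alpha>"
    using all[rule_format, OF ex] by (elim exE)
  have C: "\<And>x y. x \<in> hball d p 1 \<Longrightarrow> y \<in> hball d p 1 \<Longrightarrow>
      norm (hgrad F x - hgrad F y) \<le> C * d x y powr \<alpha>" using C0 by blast
  define Cp where "Cp = max C 0"
  have Cp0: "0 \<le> Cp" unfolding Cp_def by simp
  define v where "v = (\<lambda>j. Xder j F p)"
  obtain m where m: "m > 0" "\<And>a b. m * (\<bar>a\<bar> + \<bar>b\<bar>) \<le> norm (a *\<^sub>R v 1 + b *\<^sub>R v 2)"
    using inv_lower[of F p] assms(5) unfolding nondegenerate_def v_def by blast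
  define K where "K = d (0,0,0) (1,0,0) + d (0,0,0) (0,1,0)"
  have K0: "0 \<le> K" unfolding K_def using hd_nonneg[OF hd, of "(0,0,0)"] by (simp add: add_nonneg_nonneg)
  have Kb: "\<And>j t. j \<in> {1,2} \<Longrightarrow> d (0,0,0) (hdir j t) \<le> K * \<bar>t\<bar>"
    unfolding K_def by (rule hdir_bound[OF hd])
  obtain c0 where c0: "c0 > 0" "\<And>w. c0 * rho w \<le> d (0,0,0) w" using N_lower[OF hd] by blast
  define \<eta> where "\<eta> = m / 10"
  have eta0: "\<eta> > 0" using m(1) by (simp add: \<eta>_def)
  define r0 where "r0 = min (1/2) ((\<eta> / (2*Cp+1)) powr (1/\<alpha>))"
  have r0: "r0 > 0" unfolding r0_def using eta0 Cp0 by simp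
  have good: "norm (Xder j F q - v j) \<le> \<eta>" if q: "d p q < r0" and j: "j \<in> {1,2}" for q j
  proof -
    have dq0: "0 \<le> d q p" by (rule hd_nonneg[OF hd])
    have dqp: "d q p = d p q" by (rule hd_sym[OF hd])
    have "r0 \<le> 1/2" unfolding r0_def by simp
    then have qin: "q \<in> hball d p 1" using q by (simp add: hball_def)
    have pin: "p \<in> hball d p 1" using hd_zero[OF hd, of p] by (simp add: hball_def)
    have H: "norm (hgrad F q - hgrad F p) \<le> C * d q p powr \<alpha>" by (rule C[OF qin pin])
    also have "\<dots> \<le> Cp * d q p powr \<alpha>" unfolding Cp_def by (rule mult_right_mono) simp_all
    also have "d q p powr \<alpha> \<le> r0 powr \<alpha>" using dq0 dqp q al by (intro powr_mono2) simp_all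
    also have "r0 powr \<alpha> \<le> ((\<eta> / (2*Cp+1)) powr (1/\<alpha>)) powr \<alpha>"
      using r0 al unfolding r0_def by (intro powr_mono2) simp_all
    also have "((\<eta> / (2*Cp+1)) powr (1/\<alpha>)) powr \<alpha> = \<eta> / (2*Cp+1)"
      using al eta0 Cp0 by (simp add: powr_powr powr_one)
    finally have H2: "norm (hgrad F q - hgrad F p) \<le> Cp * (\<eta> / (2*Cp+1))" using Cp0 by (simp add: mult_left_mono)
    have "norm (Xder j F q - v j) \<le> 2 * norm (hgrad F q - hgrad F p)"
      unfolding v_def Xcol[OF j] by (rule col_bound)
    also have "\<dots> \<le> 2 * (Cp * (\<eta> / (2*Cp+1)))" using H2 by simp
    also have "\<dots> \<le> \<eta>" using Cp0 eta0 by (simp add: field_simps)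
    finally show ?thesis .
  qed
  define \<epsilon> where "\<epsilon> = r0 / (1 + 10 * K / c0)"
  have den: "1 + 10 * K / c0 > 0" using K0 c0(1) by (simp add: add_pos_nonneg)
  have eps0: "\<epsilon> > 0" unfolding \<epsilon>_def using r0 den by simp
  have e1: "\<epsilon> * (1 + 10 * K / c0) = r0" unfolding \<epsilon>_def using den by simp
  have e2: "\<epsilon> + 10 * K * \<epsilon> / c0 = \<epsilon> * (1 + 10 * K / c0)" using c0(1) by (simp add: field_simps)
  have epsr: "\<epsilon> + 10 * K * \<epsilon> / c0 = r0" using e1 e2 by simp
  have P1: "x = y" if x: "x \<in> hball d p \<epsilon>" and y: "y \<in> hball d p \<epsilon>" and Fe: "F x = F y"
    and hv: "hnorm_v (hmul (hinv x) y) \<le> hnorm_h (hmul (hinv x) y)" for x y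
  proof (rule ccontr)
    assume ne: "x \<noteq> y"
    obtain a b c where w: "hmul (hinv x) y = (a,b,c)" by (cases "hmul (hinv x) y")
    have hy: "y = hmul x (a,b,c)" unfolding w[symmetric] by (simp add: hmul_assoc[symmetric])
    have "sqrt \<bar>c\<bar> \<le> sqrt (a^2 + b^2)" using hv w by simp
    then have cle: "\<bar>c\<bar> \<le> a^2 + b^2" by simp
    define A where "A = \<bar>a\<bar> + \<bar>b\<bar>"
    have Apos: "A > 0"
    proof (rule ccontr)
      assume "\<not> A > 0"
      then have "a = 0" "b = 0" unfolding A_def by auto
      then have "c = 0" using cle by simp
      then show False using ne hy \<open>a = 0\<close> \<open>b = 0\<close> by simp
    qed
    define u where "u = sqrt (\<bar>c - a * b\<bar> / 2)"
    have t: "\<bar>c - a * b\<bar> \<le> \<bar>c\<bar> + \<bar>a\<bar> * \<bar>b\<bar>" using abs_triangle_ineq4[of c "a*b"] by (simp add: abs_mult)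
    have A2e: "A^2 = a*a + b*b + 2*(\<bar>a\<bar>*\<bar>b\<bar>)" unfolding A_def power2_eq_square by (simp add: algebra_simps)
    have "0 \<le> \<bar>a\<bar> * \<bar>b\<bar>" by simp
    then have "\<bar>c - a * b\<bar> \<le> A^2" using t A2e cle unfolding power2_eq_square by linarith
    then have "\<bar>c - a * b\<bar> / 2 \<le> A^2" using Apos by simp
    then have "u \<le> sqrt (A^2)" unfolding u_def by (rule real_sqrt_le_mono)
    then have uA: "u \<le> A" using Apos by simp
    have lse: "lsum (pathL a b c) = A + 4 * u" unfolding lsum_pathL u_def A_def by simp
    have ls: "lsum (pathL a b c) \<le> 5 * A" unfolding lse using uA by linarith
    have dxy: "d x y = d (0,0,0) (a,b,c)"
    proof -
      have "d (hmul (hinv x) x) (hmul (hinv x) y) = d x y" using hd unfolding homog_distance_def by blast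
      then show ?thesis using w by simp
    qed
    have "d x y \<le> d x p + d p y" by (rule hd_tri[OF hd])
    then have "d x y < 2 * \<epsilon>" using x y hd_sym[OF hd, of x p] by (simp add: hball_def)
    moreover have "c0 * A \<le> c0 * rho (a,b,c)" using c0(1) unfolding A_def rho_def by simp
    ultimately have "c0 * A < 2 * \<epsilon>" using c0(2)[of "(a,b,c)"] dxy by linarith
    then have A2: "A < 2 * \<epsilon> / c0" using c0(1) by (simp add: field_simps)
    have "K * lsum (pathL a b c) \<le> K * (5 * A)" using ls K0 by (simp add: mult_left_mono)
    also have "\<dots> \<le> K * (5 * (2 * \<epsilon> / c0))" using A2 K0 by (intro mult_left_mono) simp_all
    also have "K * (5 * (2 * \<epsilon> / c0)) = 10 * K * \<epsilon> / c0" by simp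
    finally have "K * lsum (pathL a b c) \<le> 10 * K * \<epsilon> / c0" .
    then have start: "d p x + K * lsum (pathL a b c) < r0" using x epsr by (simp add: hball_def)
    have est: "norm (F (walk x (pathL a b c)) - F x - sum_list (map (\<lambda>(j,t). t *\<^sub>R v j) (pathL a b c)))
        \<le> \<eta> * lsum (pathL a b c)"
      by (rule walk_est[OF hd K0 Kb js_pathL X good start])
    then have "norm (F y - F x - (a *\<^sub>R v 1 + b *\<^sub>R v 2)) \<le> \<eta> * lsum (pathL a b c)"
      using hy by (simp only: walk_pathL sum_pathL)
    moreover have "norm (F y - F x - (a *\<^sub>R v 1 + b *\<^sub>R v 2)) = norm (a *\<^sub>R v 1 + b *\<^sub>R v 2)"
    proof -
      have "F y - F x - (a *\<^sub>R v 1 + b *\<^sub>R v 2) = - (a *\<^sub>R v 1 + b *\<^sub>R v 2)" using Fe by simp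
      then show ?thesis by (simp only: norm_minus_cancel)
    qed
    ultimately have "norm (a *\<^sub>R v 1 + b *\<^sub>R v 2) \<le> \<eta> * lsum (pathL a b c)" by simp
    also have "\<dots> \<le> \<eta> * (5 * A)" using ls eta0 by (simp add: mult_left_mono)
    also have "\<eta> * (5 * A) = m * A / 2" unfolding \<eta>_def by simp
    finally have "norm (a *\<^sub>R v 1 + b *\<^sub>R v 2) \<le> m * A / 2" .
    moreover have "m * A \<le> norm (a *\<^sub>R v 1 + b *\<^sub>R v 2)" using m(2) A_def by simp
    moreover have "0 < m * A" using m(1) Apos by simp
    ultimately show False by linarith
  qed
  have P2: "x = y" if x: "x \<in> hball d p \<epsilon>" and y: "y \<in> hball d p \<epsilon>" and Fe: "F x = F y"
    and hv: "hvert (hmul (hinv x) y) = 0" for x y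
  proof (rule P1[OF x y Fe])
    obtain a b c where w: "hmul (hinv x) y = (a,b,c)" by (cases "hmul (hinv x) y")
    show "hnorm_v (hmul (hinv x) y) \<le> hnorm_h (hmul (hinv x) y)" using hv w by simp
  qed
  show ?thesis using eps0 P1 P2 by blast
qed

end
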